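(* We have $$\sum_{k=0}^\infty\frac{(30k-7)(-2)^k}{\binom{4k}{2k}}=-\frac{3\pi+64}{6}.$$ *)

theory Defs
  imports Complex_Main
begin

end

theory Submission imports Defs "HOL-Analysis.Analysis"
begin

lemma beta_nat:
  "((\<lambda>x::real. (x*(1-x))^(2*k)) has_integral (fact (2*k))^2 / fact (4*k+1)) {0..1}"
proof -
  have B: "((\<lambda>t. t powr (real (2*k+1) - 1) * (1 - t) powr (real (2*k+1) - 1)) has_integral
     Beta (real (2*k+1)) (real (2*k+1))) {0..1}"
    by (rule has_integral_Beta_real) auto
  have "Beta (real (2*k+1)) (real (2*k+1)) = (fact (2*k))^2 / fact (4*k+1)"
  proof -
    have "Gamma (real (2*k+1)) = fact (2*k)" using Gamma_fact[of "2*k", where 'a=real]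
      by (simp add: add.commute)
    moreover have "Gamma (real (2*k+1) + real (2*k+1)) = fact (4*k+1)"
      using Gamma_fact[of "4*k+1", where 'a=real] by (simp add: add.commute)
    ultimately show ?thesis by (simp add: Beta_def power2_eq_square)
  qed
  with B have B': "((\<lambda>t. t powr (real (2*k+1) - 1) * (1 - t) powr (real (2*k+1) - 1)) has_integral
     (fact (2*k))^2 / fact (4*k+1)) {0..1}" by simp
  show ?thesis
  proof (rule has_integral_spike_finite[OF _ _ B', of "{0,1}"])
    fix x :: real assume "x \<in> {0..1} - {0,1}"
    then have "x > 0" "1 - x > 0" by auto
    then show "(x*(1-x))^(2*k) = x powr (real (2*k+1) - 1) * (1 - x) powr (real (2*k+1) - 1)"
    proof -
      have e: "real (2*k+1) - 1 = real (2*k)" by simp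
      show ?thesis unfolding e using powr_realpow[of x "2*k"] powr_realpow[of "1-x" "2*k"] \<open>x>0\<close> \<open>1-x>0\<close>
        by (simp add: power_mult_distrib)
    qed
  qed auto
qed

definition Gt :: "real \<Rightarrow> real" where
  "Gt t = (-7*(1-t)^2 + 122*t*(1-t) + 240*t^2)/(1-t)^3"
definition Pn :: "real \<Rightarrow> nat \<Rightarrow> real" where
  "Pn t n = (120/(1-t)*(real n)^2 + (2*(1-t)+240*t)/(1-t)^2 * real n + Gt t) * t^n"

lemma Pn_step: assumes "t \<noteq> 1"
  shows "Pn t n - Pn t (Suc n) = (120*(real n)^2 + 2*real n - 7) * t^n"
proof -
  define s where "s = 1 - t"
  have s: "s \<noteq> 0" using assms by (simp add: s_def)
  have t: "t = 1 - s" by (simp add: s_def)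
  show ?thesis unfolding Pn_def Gt_def t using s
    by (simp add: field_simps power2_eq_square power3_eq_cube)
qed

lemma tele: assumes "t \<noteq> 1"
  shows "(\<Sum>k<n. (120*(real k)^2 + 2*real k - 7) * t^k) = Gt t - Pn t n"
proof (induction n)
  case 0
  then show ?case by (simp add: Pn_def)
next
  case (Suc n)
  then show ?case using Pn_step[OF assms, of n] by simp
qed

lemma Pn_bound: assumes "t \<le> 0" "t \<ge> -1/8"
  shows "\<bar>Pn t n\<bar> \<le> (120*(real n)^2 + 32*real n + 30) * (1/8)^n"
proof -
  have s1: "1 - t \<ge> 1" using assms by simp
  have a: "\<bar>120/(1-t)\<bar> \<le> 120" using s1 by (simp add: divide_le_eq)
  have s2: "(1-t)^2 \<ge> 1" using s1 by (simp add: one_le_power)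
  have s3: "(1-t)^3 \<ge> 1" using s1 by (simp add: one_le_power)
  have "\<bar>(2*(1-t)+240*t)/(1-t)^2\<bar> \<le> \<bar>2*(1-t)+240*t\<bar>"
    using s2 by (simp add: abs_div divide_le_eq abs_mult mult_le_cancel_left1)
  also have "\<dots> \<le> 32" using assms by simp
  finally have b: "\<bar>(2*(1-t)+240*t)/(1-t)^2\<bar> \<le> 32" .
  have "\<bar>Gt t\<bar> \<le> \<bar>-7*(1-t)^2 + 122*t*(1-t) + 240*t^2\<bar>"
    unfolding Gt_def using s3 abs_ge_self[of "(1-t)^3"] by (simp add: abs_div divide_le_eq abs_mult mult_le_cancel_left1)
  also have "\<dots> = \<bar>-7 + 136*t + 111*t^2\<bar>" by (simp add: algebra_simps power2_eq_square)
  also have "\<dots> \<le> 30"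
  proof -
    have "(-t)^2 \<le> (1/8)^2" by (rule power_mono) (use assms in auto)
    then have "t^2 \<le> 1/64" by (simp add: power2_eq_square)
    moreover have "t^2 \<ge> 0" by simp
    ultimately show ?thesis using assms unfolding abs_le_iff by linarith
  qed
  finally have c: "\<bar>Gt t\<bar> \<le> 30" .
  have tn: "\<bar>t^n\<bar> \<le> (1/8)^n" unfolding power_abs
    by (rule power_mono) (use assms in auto)
  have "\<bar>120/(1-t)*(real n)^2 + (2*(1-t)+240*t)/(1-t)^2 * real n + Gt t\<bar>
     \<le> 120*(real n)^2 + 32*real n + 30"
  proof -
    have "\<bar>120/(1-t)*(real n)^2\<bar> \<le> 120*(real n)^2" unfolding abs_mult using mult_right_mono[OF a, of "(real n)^2"] by simp
    moreover have "\<bar>(2*(1-t)+240*t)/(1-t)^2 * real n\<bar> \<le> 32*real n" unfolding abs_mult using mult_right_mono[OF b, of "real n"] by simp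
    ultimately show ?thesis using c by linarith
  qed
  then show ?thesis unfolding Pn_def abs_mult
    by (rule mult_mono) (use tn in auto)
qed

definition Ap :: "real \<Rightarrow> real" where
  "Ap x = 16/3 - 5*x + 61/3*x^2 - 140*x^3 + 590/3*x^4 - 278/3*x^5 + 14*x^6 - 4*x^7"
definition Ad :: "real \<Rightarrow> real" where
  "Ad x = - 5 + 122/3*x - 420*x^2 + 2360/3*x^3 - 1390/3*x^4 + 84*x^5 - 28*x^6"
definition qq :: "real \<Rightarrow> real" where
  "qq x = 1 + 2*(x*(1-x))^2"
definition qd :: "real \<Rightarrow> real" where
  "qd x = 4*(x*(1-x))*(1-2*x)"
definition Fx :: "real \<Rightarrow> real" where
  "Fx x = Ap x / (qq x)^2 - arctan ((2*x-1)/(1+2*x-2*x^2))"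

lemma qq_pos: "qq x \<ge> 1" unfolding qq_def by simp

lemma dAp: "(Ap has_real_derivative Ad x) (at x)"
  unfolding Ap_def Ad_def
  by (rule derivative_eq_intros refl | simp)+

lemma dqq: "(qq has_real_derivative qd x) (at x)"
  unfolding qq_def qd_def
  by (rule derivative_eq_intros refl | simp)+

lemma poly_id: "Ad x * qq x - 2 * Ap x * qd x
   = 444*(x*(1-x))^4 - 272*(x*(1-x))^2 - 7 + 2*(1 - x*(1-x))*(qq x)^2"
  unfolding Ad_def Ap_def qq_def qd_def by algebra

lemma darc: assumes "x \<in> {0..1}"
  shows "((\<lambda>x. arctan ((2*x-1)/(1+2*x-2*x^2))) has_real_derivative 2*(1 - x*(1-x))/qq x) (at x)"
proof -
  have "x*(1-x) \<ge> 0" using assms by simp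
  then have D: "1+2*x-2*x^2 \<ge> 1" by (simp add: power2_eq_square algebra_simps)
  have q: "qq x \<ge> 1" by (rule qq_pos)
  have h1: "((\<lambda>x. (2*x-1)/(1+2*x-2*x^2)) has_real_derivative 4*(1 - x*(1-x))/(1+2*x-2*x^2)^2) (at x)"
    apply (rule derivative_eq_intros refl)+
    using D apply simp
    using D by (simp add: divide_simps) (simp add: algebra_simps power2_eq_square)
  have h2: "(arctan has_real_derivative inverse (1 + ((2*x-1)/(1+2*x-2*x^2))^2)) (at ((2*x-1)/(1+2*x-2*x^2)))"
    by (rule DERIV_arctan)
  have e: "1 + ((2*x-1)/(1+2*x-2*x^2))^2 = 2*qq x/(1+2*x-2*x^2)^2"
    using D unfolding qq_def by (simp add: divide_simps) (simp add: algebra_simps power2_eq_square)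
  have "((\<lambda>x. arctan ((2*x-1)/(1+2*x-2*x^2))) has_real_derivative
     inverse (1 + ((2*x-1)/(1+2*x-2*x^2))^2) * (4*(1 - x*(1-x))/(1+2*x-2*x^2)^2)) (at x)"
    by (rule DERIV_chain2[OF h2 h1])
  moreover have "inverse (1 + ((2*x-1)/(1+2*x-2*x^2))^2) * (4*(1 - x*(1-x))/(1+2*x-2*x^2)^2)
     = 2*(1 - x*(1-x))/qq x"
    unfolding e using D q by (simp add: field_simps)
  ultimately show ?thesis by simp
qed

lemma dF: assumes "x \<in> {0..1}"
  shows "(Fx has_real_derivative (444*(x*(1-x))^4 - 272*(x*(1-x))^2 - 7)/(qq x)^3) (at x)"
proof -
  have q: "qq x \<ge> 1" by (rule qq_pos)
  have d0: "((\<lambda>x. (qq x)^2) has_real_derivative of_nat 2 * (qd x * (qq x)^(2 - Suc 0))) (at x)"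
    by (rule DERIV_power[OF dqq])
  have d1': "((\<lambda>x. Ap x / (qq x)^2) has_real_derivative
       (Ad x * (qq x)^2 - Ap x * (of_nat 2 * (qd x * (qq x)^(2 - Suc 0)))) / ((qq x)^2 * (qq x)^2)) (at x)"
    by (rule DERIV_divide[OF dAp d0]) (use q in simp)
  have "(Ad x * (qq x)^2 - Ap x * (of_nat 2 * (qd x * (qq x)^(2 - Suc 0)))) / ((qq x)^2 * (qq x)^2)
      = (Ad x * qq x - 2 * Ap x * qd x)/(qq x)^3"
    using q by (simp add: field_simps power2_eq_square power3_eq_cube)
  with d1' have d1: "((\<lambda>x. Ap x / (qq x)^2) has_real_derivative (Ad x * qq x - 2 * Ap x * qd x)/(qq x)^3) (at x)"
    by simp
  have "(Fx has_real_derivative (Ad x * qq x - 2 * Ap x * qd x)/(qq x)^3 - 2*(1 - x*(1-x))/qq x) (at x)"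
    unfolding Fx_def by (rule DERIV_diff[OF d1 darc[OF assms]])
  moreover have "(Ad x * qq x - 2 * Ap x * qd x)/(qq x)^3 - 2*(1 - x*(1-x))/qq x
     = (444*(x*(1-x))^4 - 272*(x*(1-x))^2 - 7)/(qq x)^3"
    unfolding poly_id using q by (simp add: field_simps power2_eq_square power3_eq_cube)
  ultimately show ?thesis by simp
qed

lemma gam_eq: "Gt (-2*(x*(1-x))^2) = (444*(x*(1-x))^4 - 272*(x*(1-x))^2 - 7)/(qq x)^3"
proof -
  have e: "1 - (-2*(x*(1-x))^2) = qq x" unfolding qq_def by simp
  show ?thesis unfolding Gt_def e unfolding qq_def
    by (simp add: algebra_simps power2_eq_square power3_eq_cube power4_eq_xxxx)
qed

lemma int_gam: "((\<lambda>x. Gt (-2*(x*(1-x))^2)) has_integral (-(3*pi+64)/6)) {0..1}"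
proof -
  have "((\<lambda>x. Gt (-2*(x*(1-x))^2)) has_integral (Fx 1 - Fx 0)) {0..1}"
    unfolding gam_eq
    by (rule fundamental_theorem_of_calculus)
       (auto intro!: DERIV_subset[OF dF] simp: has_real_derivative_iff_has_vector_derivative[symmetric])
  moreover have "Fx 1 - Fx 0 = -(3*pi+64)/6"
    unfolding Fx_def Ap_def qq_def by (simp add: arctan_one arctan_minus)
  ultimately show ?thesis by simp
qed

lemma aux_div: fixes A B C D F :: real assumes "B \<noteq> 0" "C \<noteq> 0" "F \<noteq> 0"
  shows "A*B*D * (F/(B*(C*F))) = A*D/C"
  using assms by (simp add: field_simps)

lemma term_int:
  "((\<lambda>x. (120*(real k)^2 + 2*real k - 7) * (-2*(x*(1-x))^2)^k) has_integral
     ((30 * real k - 7) * (-2) ^ k / real ((4 * k) choose (2 * k)))) {0..1}"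
proof -
  define c where "c = (30 * real k - 7) * (4*real k + 1) * (-2)^k"
  have B: "((\<lambda>x. c * (x*(1-x))^(2*k)) has_integral c * ((fact (2*k))^2 / fact (4*k+1))) {0..1}"
    by (rule has_integral_mult_right[OF beta_nat])
  have f1: "fact (4*k) = real ((4 * k) choose (2 * k)) * (fact (2*k))^2"
  proof -
    have "fact (2*k) * fact (4*k - 2*k) * ((4 * k) choose (2 * k)) = (fact (4*k) :: nat)"
      by (rule binomial_fact_lemma) simp
    moreover have "4*k - 2*k = 2*k" by simp
    ultimately have "fact (2*k) * fact (2*k) * ((4 * k) choose (2 * k)) = (fact (4*k) :: nat)" by simp
    then have "real (fact (2*k) * fact (2*k) * ((4 * k) choose (2 * k))) = real (fact (4*k))" by simp
    then have "(fact (2*k)::real) * fact (2*k) * real ((4 * k) choose (2 * k)) = fact (4*k)"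
      by (simp only: of_nat_mult of_nat_fact)
    then show ?thesis by (simp add: power2_eq_square mult_ac)
  qed
  have f2: "(fact (4*k+1) :: real) = (4*real k + 1) * fact (4*k)"
  proof -
    have e: "4*k+1 = Suc (4*k)" by simp
    show ?thesis unfolding e fact_Suc by simp
  qed
  have Cpos: "real ((4 * k) choose (2 * k)) \<noteq> 0" by simp
  have fpos: "(fact (2*k) :: real)^2 \<noteq> 0" by simp
  have b: "4*real k + 1 \<noteq> 0" by (simp add: add_nonneg_eq_0_iff)
  have v: "c * ((fact (2*k))^2 / fact (4*k+1)) = (30 * real k - 7) * (-2) ^ k / real ((4 * k) choose (2 * k))"
    unfolding c_def f2 f1 by (rule aux_div[OF b Cpos fpos])
  have i: "c * (x*(1-x))^(2*k) = (120*(real k)^2 + 2*real k - 7) * (-2*(x*(1-x))^2)^k" for x :: real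
  proof -
    have p: "(-2*(x*(1-x))^2)^k = (-2)^k * (x*(1-x))^(2*k)"
      by (simp only: power_mult_distrib power_mult)
    have q: "(30 * real k - 7) * (4*real k + 1) = 120*(real k)^2 + 2*real k - 7"
      by (simp add: algebra_simps power2_eq_square)
    show ?thesis unfolding c_def p q[symmetric] by (simp only: mult_ac)
  qed
  show ?thesis using B unfolding v i .
qed

lemma y_bounds: assumes "x \<in> {0..1::real}"
  shows "-2*(x*(1-x))^2 \<le> 0" "-2*(x*(1-x))^2 \<ge> -1/8"
proof -
  have a: "x*(1-x) \<ge> 0" using assms by simp
  have "(x - 1/2)^2 \<ge> 0" by simp
  then have b: "x*(1-x) \<le> 1/4" by (simp add: power2_eq_square algebra_simps)
  have "(x*(1-x))^2 \<le> (1/4)^2" by (rule power_mono[OF b a])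
  then show "-2*(x*(1-x))^2 \<ge> -1/8" by (simp add: power2_eq_square)
  show "-2*(x*(1-x))^2 \<le> 0" by simp
qed

theorem corollary1p2:
  shows "(\<lambda>k::nat. (30 * real k - 7) * (-2) ^ k / real ((4 * k) choose (2 * k)))
           sums (- (3 * pi + 64) / 6)"
proof -
  define a where "a = (\<lambda>k::nat. (30 * real k - 7) * (-2) ^ k / real ((4 * k) choose (2 * k)))"
  define I :: real where "I = - (3 * pi + 64) / 6"
  define M where "M = (\<lambda>n::nat. (120*(real n)^2 + 32*real n + 30) * (1/8::real)^n)"
  define T where "T = (\<lambda>x::real. -2*(x*(1-x))^2)"
  have bnd: "\<bar>(\<Sum>k<n. a k) - I\<bar> \<le> M n" for n
  proof -
    have "((\<lambda>x. \<Sum>k<n. (120*(real k)^2 + 2*real k - 7) * (T x)^k) has_integral (\<Sum>k<n. a k)) {0..1}"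
      unfolding a_def T_def by (rule has_integral_sum[OF finite_lessThan]) (intro ballI term_int)
    moreover have "(\<Sum>k<n. (120*(real k)^2 + 2*real k - 7) * (T x)^k) = Gt (T x) - Pn (T x) n" for x
      by (rule tele) (unfold T_def, use zero_le_power2[of "x*(1-x)"] in linarith)
    ultimately have h1: "((\<lambda>x. Gt (T x) - Pn (T x) n) has_integral (\<Sum>k<n. a k)) {0..1}" by simp
    have h2: "((\<lambda>x. Gt (T x)) has_integral I) {0..1}" unfolding T_def I_def by (rule int_gam)
    have h3: "((\<lambda>x. Pn (T x) n) has_integral (I - (\<Sum>k<n. a k))) {0..1}"
      using has_integral_diff[OF h2 h1] by simp
    have pb: "\<bar>Pn (T x) n\<bar> \<le> M n" if "x \<in> {0..1}" for x
      unfolding M_def T_def by (rule Pn_bound) (use y_bounds[OF that] in auto)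
    have cM: "((\<lambda>x. M n) has_integral M n) {0..1::real}"
      using has_integral_const_real[of "M n" 0 1] by simp
    have cM': "((\<lambda>x. - M n) has_integral - M n) {0..1::real}"
      using has_integral_const_real[of "- M n" 0 1] by simp
    have "I - (\<Sum>k<n. a k) \<le> M n"
      by (rule has_integral_le[OF h3 cM]) (use pb in \<open>force simp: abs_le_iff\<close>)
    moreover have "- M n \<le> I - (\<Sum>k<n. a k)"
      by (rule has_integral_le[OF cM' h3]) (use pb in \<open>force simp: abs_le_iff\<close>)
    ultimately show ?thesis by linarith
  qed
  have M0: "M \<longlonglongrightarrow> 0"
  proof -
    have l1: "(\<lambda>n. real n * (1/2::real)^n) \<longlonglongrightarrow> 0"
      by (rule powser_times_n_limit_0) simp
    have l2: "(\<lambda>n. real n * (1/8::real)^n) \<longlonglongrightarrow> 0"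
      by (rule powser_times_n_limit_0) simp
    have l3: "(\<lambda>n. (1/8::real)^n) \<longlonglongrightarrow> 0" by (rule LIMSEQ_power_zero) simp
    have l4: "(\<lambda>n. (1/2::real)^n) \<longlonglongrightarrow> 0" by (rule LIMSEQ_power_zero) simp
    have "(\<lambda>n. 120*(real n*(1/2::real)^n)^2*(1/2)^n + 32*(real n*(1/8)^n) + 30*(1/8)^n)
       \<longlonglongrightarrow> 120*0^2*0 + 32*0 + 30*0"
      by (intro tendsto_intros l1 l2 l3 l4)
    moreover have "120*(real n*(1/2::real)^n)^2*(1/2)^n + 32*(real n*(1/8)^n) + 30*(1/8)^n = M n" for n
    proof -
      have e: "(1/8::real)^n = ((1/2)^n)^2 * (1/2)^n"
        by (simp add: power2_eq_square power_mult_distrib[symmetric])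
      show ?thesis unfolding M_def e by (simp add: algebra_simps power2_eq_square)
    qed
    ultimately show ?thesis by simp
  qed
  have "(\<lambda>n. (\<Sum>k<n. a k) - I) \<longlonglongrightarrow> 0"
    by (rule Lim_null_comparison[OF _ M0]) (use bnd in auto)
  then have "(\<lambda>n. \<Sum>k<n. a k) \<longlonglongrightarrow> I" by (simp add: LIM_zero_iff)
  then show ?thesis unfolding sums_def a_def I_def .
qed

end
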